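(* Let $\omega\in(0,1)$ and let $K\in\mathbb{R}^{n\times n}$ be diagonalizable with real negative eigenvalues. Let $\mathcal{A}=I_m\otimes I_n-(I^{(-1)}D)\otimes K$ and $\mathcal{P}(\omega)=I_m\otimes I_n-(S(\omega)D)\otimes K$. Then $\mathcal{P}(\omega)$ is nonsingular, at most $n$ eigenvalues of $\mathcal{P}(\omega)^{-1}\mathcal{A}$ (counted with multiplicity) differ from $1$, and $$\sigma(\mathcal{P}(\omega)^{-1}\mathcal{A})\subset\left[1,\tfrac{1}{1-\omega}\right).$$
   Context: $M\ge1$, $m=2M+1$, $h>0$, $T>0$. Sinc time points $t_j=\dfrac{T e^{jh}}{1+e^{jh}}$, $j=-M,\dots,M$. $D=h\,\mathrm{diag}\big(t_{-M}(T-t_{-M})/T,\dots,t_M(T-t_M)/T\big)$. $I^{(-1)}\in\mathbb{R}^{m\times m}$ is the Toeplitz matrix with entries $I^{(-1)}_{l,j}=\frac12+\int_0^{l-j}\frac{\sin(\pi t)}{\pi t}\,dt$. $e_m=(1,\dots,1)^{\mathsf T}\in\mathbb{R}^m$. $S(\omega):=I^{(-1)}-\frac{\omega}{2}e_me_m^{\mathsf T}$. $\otimes$ is the Kronecker product and $I_p$ the $p\times p$ identity. *)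

theory Defs
  imports "HOL-Analysis.Henstock_Kurzweil_Integration"
    "Jordan_Normal_Form.Matrix" "Jordan_Normal_Form.Char_Poly"
begin

definition sinc_int :: "real \<Rightarrow> real" where
  "sinc_int x = (if 0 \<le> x then integral {0..x} (\<lambda>t. sin (pi * t) / (pi * t))
                 else - integral {x..0} (\<lambda>t. sin (pi * t) / (pi * t)))"

definition kron :: "'a :: times mat \<Rightarrow> 'a mat \<Rightarrow> 'a mat" where
  "kron A B = mat (dim_row A * dim_row B) (dim_col A * dim_col B)
     (\<lambda>(i, j). A $$ (i div dim_row B, j div dim_col B) * B $$ (i mod dim_row B, j mod dim_col B))"

text \<open>Sinc time points t_j, j = -M..M, stored at index l = j + M (0 \<le> l < 2M+1).\<close>
definition sinc_pt :: "nat \<Rightarrow> real \<Rightarrow> real \<Rightarrow> nat \<Rightarrow> real" where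
  "sinc_pt M h T l = T * exp ((real_of_int (int l - int M)) * h) / (1 + exp ((real_of_int (int l - int M)) * h))"

definition Dmat :: "nat \<Rightarrow> real \<Rightarrow> real \<Rightarrow> real mat" where
  "Dmat M h T = mat (2*M+1) (2*M+1)
     (\<lambda>(i, j). if i = j then h * (sinc_pt M h T i * (T - sinc_pt M h T i) / T) else 0)"

definition Iinv :: "nat \<Rightarrow> real mat" where
  "Iinv M = mat (2*M+1) (2*M+1) (\<lambda>(l, j). 1/2 + sinc_int (real_of_int (int l - int j)))"

definition Smat :: "nat \<Rightarrow> real \<Rightarrow> real mat" where
  "Smat M \<omega> = Iinv M - mat (2*M+1) (2*M+1) (\<lambda>_. \<omega> / 2)"

definition mat_inv :: "'a :: semiring_1 mat \<Rightarrow> 'a mat" where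
  "mat_inv A = (SOME B. B \<in> carrier_mat (dim_row A) (dim_row A) \<and> inverts_mat A B \<and> inverts_mat B A)"

definition alg_mult :: "'a :: field mat \<Rightarrow> 'a \<Rightarrow> nat" where
  "alg_mult A x = order x (char_poly A)"

end

theory Submission
  imports Defs
begin


lemma sinc_int_odd: "sinc_int (- x) = - sinc_int x"
proof -
  let ?f = "\<lambda>t::real. sin (pi * t) / (pi * t)"
  have ev: "?f (-t) = ?f t" for t by simp
  have refl: "integral {-b..0} ?f = integral {0..b} ?f" for b
    using integral_reflect_real[of b 0 ?f] by (simp add: ev)
  show ?thesis
  proof (cases "x = 0")
    case True then show ?thesis by (simp add: sinc_int_def)
  next
    case False
    show ?thesis
    proof (cases "x > 0")
      case True then show ?thesis by (simp add: sinc_int_def refl)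
    next
      case False
      with \<open>x \<noteq> 0\<close> have "x < 0" by simp
      then show ?thesis using refl[of "-x"] by (simp add: sinc_int_def)
    qed
  qed
qed

lemma sum_split_mn: fixes m n :: nat shows "(\<Sum>r<m*n. f r) = (\<Sum>j<m. \<Sum>k<n. f (j*n+k))"
proof -
  have "sum f {..<m*n} = (\<Sum>j<m. sum f {j*n..<j*n+n})" by (rule sum.nat_group[symmetric])
  also have "\<dots> = (\<Sum>j<m. \<Sum>k<n. f (j*n+k))"
  proof (rule sum.cong[OF refl])
    fix j
    have e: "{j*n..<j*n+n} = {0 + j*n..<n + j*n}" by auto
    have "sum f {j*n..<j*n+n} = (\<Sum>k\<in>{0..<n}. f (k + j*n))"
      unfolding e by (rule sum.shift_bounds_nat_ivl)
    also have "\<dots> = (\<Sum>k<n. f (j*n+k))"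
      by (simp only: lessThan_atLeast0 add.commute)
    finally show "sum f {j*n..<j*n+n} = (\<Sum>k<n. f (j*n+k))" .
  qed
  finally show ?thesis .
qed
lemma sinc_pt_bounds: assumes "T > 0" shows "0 < sinc_pt M h T l" "sinc_pt M h T l < T"
proof -
  let ?e = "exp ((real_of_int (int l - int M)) * h)"
  have e: "?e > 0" by simp
  show "0 < sinc_pt M h T l" unfolding sinc_pt_def using e assms
    by (intro divide_pos_pos mult_pos_pos) (auto simp: add_pos_pos)
  have "T * ?e < T * (1 + ?e)" using assms by simp
  moreover have e1: "1 + ?e > 0" using e by linarith
  ultimately show "sinc_pt M h T l < T" unfolding sinc_pt_def by (simp add: divide_less_eq)
qed

definition dd :: "nat \<Rightarrow> real \<Rightarrow> real \<Rightarrow> nat \<Rightarrow> real" where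
  "dd M h T j = h * (sinc_pt M h T j * (T - sinc_pt M h T j) / T)"

lemma dd_pos: assumes "h > 0" "T > 0" shows "dd M h T j > 0"
  using sinc_pt_bounds[OF assms(2), of M h j] assms unfolding dd_def by simp

lemma Dmat_carrier: "Dmat M h T \<in> carrier_mat (2*M+1) (2*M+1)"
  by (simp add: Dmat_def)
lemma Iinv_carrier: "Iinv M \<in> carrier_mat (2*M+1) (2*M+1)"
  by (simp add: Iinv_def)
lemma Smat_carrier: "Smat M w \<in> carrier_mat (2*M+1) (2*M+1)"
  unfolding carrier_mat_def Smat_def Iinv_def by simp

lemma Dmat_index: "i < 2*M+1 \<Longrightarrow> j < 2*M+1 \<Longrightarrow> Dmat M h T $$ (i,j) = (if i = j then dd M h T j else 0)"
  by (simp add: Dmat_def dd_def)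

lemma Iinv_index: "i < 2*M+1 \<Longrightarrow> j < 2*M+1 \<Longrightarrow> Iinv M $$ (i,j) = 1/2 + sinc_int (real_of_int (int i - int j))"
  by (simp add: Iinv_def)

lemma Smat_index: "i < 2*M+1 \<Longrightarrow> j < 2*M+1 \<Longrightarrow> Smat M w $$ (i,j) = 1/2 + sinc_int (real_of_int (int i - int j)) - w/2"
  unfolding carrier_mat_def Smat_def Iinv_def by simp

lemma mult_diag_index: assumes "X \<in> carrier_mat (2*M+1) (2*M+1)" "i < 2*M+1" "j < 2*M+1"
  shows "(X * Dmat M h T) $$ (i,j) = X $$ (i,j) * dd M h T j"
proof -
  have "(X * Dmat M h T) $$ (i,j) = (\<Sum>k<2*M+1. X $$ (i,k) * Dmat M h T $$ (k,j))"
    using assms by (simp add: Dmat_def scalar_prod_def lessThan_atLeast0)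
  also have "\<dots> = (\<Sum>k<2*M+1. if k = j then X $$ (i,k) * dd M h T j else 0)"
  proof (rule sum.cong)
    fix k assume "k \<in> {..<2*M+1}"
    then show "X $$ (i,k) * Dmat M h T $$ (k,j) = (if k = j then X $$ (i,k) * dd M h T j else 0)"
      using Dmat_index[of k M j h T] assms by auto
  qed simp
  also have "\<dots> = X $$ (i,j) * dd M h T j" using assms by simp
  finally show ?thesis .
qed

lemma skew_quad_zero:
  fixes u :: "nat \<Rightarrow> real"
  assumes "\<And>i j. a j i = - a i j"
  shows "(\<Sum>i\<in>A. \<Sum>j\<in>A. u i * u j * a i j) = 0"
proof -
  let ?Q = "(\<Sum>i\<in>A. \<Sum>j\<in>A. u i * u j * a i j)"
  have "?Q = (\<Sum>j\<in>A. \<Sum>i\<in>A. u i * u j * a i j)" by (rule sum.swap)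
  also have "\<dots> = (\<Sum>j\<in>A. \<Sum>i\<in>A. - (u j * u i * a j i))"
  proof (intro sum.cong refl)
    fix j i show "u i * u j * a i j = - (u j * u i * a j i)"
      using assms[of i j] by (simp add: mult.commute mult.left_commute)
  qed
  also have "\<dots> = - ?Q" by (simp add: sum_negf)
  finally show ?thesis by simp
qed

lemma sinc_skew: "sinc_int (real_of_int (int j - int i)) = - sinc_int (real_of_int (int i - int j))"
proof -
  have "real_of_int (int j - int i) = - real_of_int (int i - int j)" by simp
  then show ?thesis using sinc_int_odd by metis
qed

lemma quad:
  fixes r :: "nat \<Rightarrow> real"
  assumes eq: "\<forall>i<2*M+1. r i + \<mu> * (\<Sum>j<2*M+1. Smat M w $$ (i,j) * dd M h T j * r j) = c"
  shows "(\<Sum>i<2*M+1. dd M h T i * r i ^ 2) + \<mu> * (1 - w) / 2 * (\<Sum>i<2*M+1. dd M h T i * r i)^2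
         = c * (\<Sum>i<2*M+1. dd M h T i * r i)"
proof -
  define m where "m = 2*M+1"
  define u where "u i = dd M h T i * r i" for i
  define s where "s = (\<Sum>i<m. u i)"
  define a where "a i j = sinc_int (real_of_int (int i - int j))" for i j
  have S: "i < m \<Longrightarrow> j < m \<Longrightarrow> Smat M w $$ (i,j) = (1 - w)/2 + a i j" for i j
    unfolding m_def a_def by (simp add: Smat_index)
  have "(\<Sum>i<m. u i * (r i + \<mu> * (\<Sum>j<m. Smat M w $$ (i,j) * u j))) = (\<Sum>i<m. u i * c)"
    using eq unfolding m_def u_def by (intro sum.cong refl) (simp add: mult.assoc)
  also have "\<dots> = c * s" unfolding s_def by (simp add: sum_distrib_left mult.commute)
  finally have A: "(\<Sum>i<m. u i * (r i + \<mu> * (\<Sum>j<m. Smat M w $$ (i,j) * u j))) = c * s" .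
  have "(\<Sum>i<m. u i * (r i + \<mu> * (\<Sum>j<m. Smat M w $$ (i,j) * u j)))
     = (\<Sum>i<m. u i * r i) + \<mu> * (\<Sum>i<m. \<Sum>j<m. u i * u j * Smat M w $$ (i,j))"
    by (simp add: distrib_left sum.distrib sum_distrib_left mult_ac)
  also have "(\<Sum>i<m. \<Sum>j<m. u i * u j * Smat M w $$ (i,j))
     = (\<Sum>i<m. \<Sum>j<m. u i * u j * ((1 - w)/2)) + (\<Sum>i<m. \<Sum>j<m. u i * u j * a i j)"
    by (simp add: S sum.distrib distrib_left)
  also have "(\<Sum>i<m. \<Sum>j<m. u i * u j * a i j) = 0"
    by (rule skew_quad_zero) (unfold a_def, metis sinc_skew)
  also have "(\<Sum>i<m. \<Sum>j<m. u i * u j * ((1 - w)/2)) = (1 - w)/2 * s^2"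
    unfolding s_def power2_eq_square by (simp add: sum_distrib_left sum_distrib_right mult_ac)
  also have "(\<Sum>i<m. u i * r i) = (\<Sum>i<m. dd M h T i * r i ^ 2)"
    unfolding u_def by (simp add: power2_eq_square mult_ac)
  finally show ?thesis using A unfolding s_def u_def m_def by (simp add: mult_ac)
qed

lemma col_real_inj:
  fixes r :: "nat \<Rightarrow> real"
  assumes "h > 0" "T > 0" "\<mu> > 0" "w \<le> 1"
  and eq: "\<forall>i<2*M+1. r i + \<mu> * (\<Sum>j<2*M+1. Smat M w $$ (i,j) * dd M h T j * r j) = 0"
  shows "\<forall>i<2*M+1. r i = 0"
proof -
  have q: "(\<Sum>i<2*M+1. dd M h T i * r i ^ 2) + \<mu> * (1 - w) / 2 * (\<Sum>i<2*M+1. dd M h T i * r i)^2 = 0"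
    using quad[OF eq] by simp
  have nn: "0 \<le> \<mu> * (1 - w) / 2 * (\<Sum>i<2*M+1. dd M h T i * r i)^2" using assms by simp
  have tn: "\<And>i. 0 \<le> dd M h T i * r i ^ 2" using dd_pos[OF assms(1,2)] by (simp add: less_imp_le)
  have "(\<Sum>i<2*M+1. dd M h T i * r i ^ 2) \<le> 0" using q nn by linarith
  moreover have "(\<Sum>i<2*M+1. dd M h T i * r i ^ 2) \<ge> 0" using tn by (simp add: sum_nonneg)
  ultimately have "(\<Sum>i<2*M+1. dd M h T i * r i ^ 2) = 0" by simp
  then have "\<forall>i\<in>{..<2*M+1}. dd M h T i * r i ^ 2 = 0"
    using sum_nonneg_eq_0_iff[of "{..<2*M+1}" "\<lambda>i. dd M h T i * r i ^ 2"] tn by simp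
  then show ?thesis using dd_pos[OF assms(1,2), of M] by (metis lessThan_iff less_irrefl mult_eq_0_iff power_not_zero)
qed

lemma col_cplx_inj:
  fixes y :: "nat \<Rightarrow> complex"
  assumes "h > 0" "T > 0" "\<mu> > 0" "w \<le> 1"
  and eq: "\<forall>i<2*M+1. y i + of_real \<mu> * (\<Sum>j<2*M+1. of_real (Smat M w $$ (i,j) * dd M h T j) * y j) = 0"
  shows "\<forall>i<2*M+1. y i = 0"
proof -
  have re: "\<forall>i<2*M+1. Re (y i) + \<mu> * (\<Sum>j<2*M+1. Smat M w $$ (i,j) * dd M h T j * Re (y j)) = 0"
  proof (intro allI impI)
    fix i assume "i < 2*M+1"
    then have "Re (y i + of_real \<mu> * (\<Sum>j<2*M+1. of_real (Smat M w $$ (i,j) * dd M h T j) * y j)) = 0"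
      using eq by simp
    then show "Re (y i) + \<mu> * (\<Sum>j<2*M+1. Smat M w $$ (i,j) * dd M h T j * Re (y j)) = 0" by simp
  qed
  have im: "\<forall>i<2*M+1. Im (y i) + \<mu> * (\<Sum>j<2*M+1. Smat M w $$ (i,j) * dd M h T j * Im (y j)) = 0"
  proof (intro allI impI)
    fix i assume "i < 2*M+1"
    then have "Im (y i + of_real \<mu> * (\<Sum>j<2*M+1. of_real (Smat M w $$ (i,j) * dd M h T j) * y j)) = 0"
      using eq by simp
    then show "Im (y i) + \<mu> * (\<Sum>j<2*M+1. Smat M w $$ (i,j) * dd M h T j * Im (y j)) = 0" by simp
  qed
  show ?thesis using col_real_inj[OF assms(1-4) re] col_real_inj[OF assms(1-4) im]
    by (simp add: complex_eq_iff)
qed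

lemma range_ineq:
  fixes w t :: real
  assumes "0 < w" "w < 1" "t \<ge> 0" "(1 - w) * t < 1"
  shows "1 + w * t < 1 / (1 - w)"
proof -
  have "w * ((1 - w) * t) < w * 1" using assms by (intro mult_strict_left_mono) auto
  then have "(1 + w * t) * (1 - w) < 1" by (simp add: algebra_simps)
  then show ?thesis using assms by (simp add: less_divide_eq)
qed

lemma col_eig:
  fixes y :: "nat \<Rightarrow> complex"
  assumes hT: "h > 0" "T > 0" and mu: "\<mu> > 0" and w: "0 < w" "w < 1"
  and nz: "\<exists>j<2*M+1. y j \<noteq> 0"
  and eq: "\<forall>i<2*M+1. y i + of_real \<mu> * (\<Sum>j<2*M+1. of_real (Iinv M $$ (i,j) * dd M h T j) * y j)
     = z * (y i + of_real \<mu> * (\<Sum>j<2*M+1. of_real (Smat M w $$ (i,j) * dd M h T j) * y j))"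
  shows "z \<in> complex_of_real ` {1..<1/(1-w)}"
proof -
  define m where "m = 2*M+1"
  define P where "P x i = x i + of_real \<mu> * (\<Sum>j<m. of_real (Smat M w $$ (i,j) * dd M h T j) * x j)"
    for x :: "nat \<Rightarrow> complex" and i
  define s where "s = (\<Sum>j<m. of_real (dd M h T j) * y j)"
  have wle: "w \<le> 1" using w by simp
  have I: "i<m \<Longrightarrow> j<m \<Longrightarrow> Iinv M $$ (i,j) = Smat M w $$ (i,j) + w/2" for i j
    by (simp add: m_def Iinv_index Smat_index)
  have eq2: "P y i + of_real (\<mu>*w/2) * s = z * P y i" if i: "i<m" for i
  proof -
    have "(\<Sum>j<m. of_real (Iinv M $$ (i,j) * dd M h T j) * y j)
        = (\<Sum>j<m. of_real (Smat M w $$ (i,j) * dd M h T j) * y j + of_real (w/2) * (of_real (dd M h T j) * y j))"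
      by (rule sum.cong[OF refl]) (simp add: I i algebra_simps)
    also have "\<dots> = (\<Sum>j<m. of_real (Smat M w $$ (i,j) * dd M h T j) * y j) + of_real (w/2) * s"
      unfolding s_def by (simp add: sum.distrib sum_distrib_left)
    finally have "(\<Sum>j<m. of_real (Iinv M $$ (i,j) * dd M h T j) * y j)
        = (\<Sum>j<m. of_real (Smat M w $$ (i,j) * dd M h T j) * y j) + of_real (w/2) * s" .
    moreover have "y i + of_real \<mu> * (\<Sum>j<m. of_real (Iinv M $$ (i,j) * dd M h T j) * y j)
     = z * (y i + of_real \<mu> * (\<Sum>j<m. of_real (Smat M w $$ (i,j) * dd M h T j) * y j))"
      using eq i unfolding m_def by blast
    ultimately show ?thesis unfolding P_def
      by (simp only: distrib_left of_real_mult of_real_divide) (simp add: algebra_simps)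
  qed
  have one: "1 < 1 / (1 - w)" using w by (simp add: less_divide_eq)
  show ?thesis
  proof (cases "z = 1")
    case True
    then show ?thesis using one by (intro image_eqI[of _ _ 1]) auto
  next
    case False
    then have z1: "z - 1 \<noteq> 0" by simp
    define \<kappa> where "\<kappa> = of_real (\<mu>*w/2) * s / (z - 1)"
    have Pk: "P y i = \<kappa>" if "i<m" for i
    proof -
      have "(z - 1) * P y i = z * P y i - P y i" by (simp add: algebra_simps)
      also have "\<dots> = of_real (\<mu>*w/2) * s" using eq2[OF that] by (metis add_diff_cancel_left')
      finally have "(z - 1) * P y i = of_real (\<mu>*w/2) * s" .
      then show ?thesis unfolding \<kappa>_def using z1 by (simp add: field_simps)
    qed
    have k0: "\<kappa> \<noteq> 0"
    proof
      assume "\<kappa> = 0"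
      then have "\<forall>i<2*M+1. y i + of_real \<mu> * (\<Sum>j<2*M+1. of_real (Smat M w $$ (i,j) * dd M h T j) * y j) = 0"
        using Pk unfolding P_def m_def by simp
      from col_cplx_inj[OF hT mu wle this] nz show False by auto
    qed
    define y' where "y' j = y j / \<kappa>" for j
    have Py': "P y' i = 1" if i: "i<m" for i
    proof -
      have "(\<Sum>j<m. of_real (Smat M w $$ (i,j) * dd M h T j) * y' j)
          = (\<Sum>j<m. of_real (Smat M w $$ (i,j) * dd M h T j) * y j) / \<kappa>"
        unfolding y'_def by (simp add: sum_divide_distrib)
      then have "P y' i = P y i / \<kappa>" unfolding P_def y'_def by (simp add: add_divide_distrib)
      then show ?thesis using Pk[OF i] k0 by simp
    qed
    have imeq: "\<forall>i<2*M+1. Im (y' i) + \<mu> * (\<Sum>j<2*M+1. Smat M w $$ (i,j) * dd M h T j * Im (y' j)) = 0"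
    proof (intro allI impI)
      fix i assume "i < 2*M+1"
      then have "Im (P y' i) = 0" using Py' unfolding m_def by simp
      then show "Im (y' i) + \<mu> * (\<Sum>j<2*M+1. Smat M w $$ (i,j) * dd M h T j * Im (y' j)) = 0"
        unfolding P_def m_def by simp
    qed
    have im0: "\<forall>i<2*M+1. Im (y' i) = 0" by (rule col_real_inj[OF hT mu wle imeq])
    define r where "r j = Re (y' j)" for j
    have yr: "j < m \<Longrightarrow> y' j = of_real (r j)" for j
      using im0 unfolding r_def m_def by (simp add: complex_eq_iff)
    have req: "\<forall>i<2*M+1. r i + \<mu> * (\<Sum>j<2*M+1. Smat M w $$ (i,j) * dd M h T j * r j) = 1"
    proof (intro allI impI)
      fix i assume "i < 2*M+1"
      then have "Re (P y' i) = 1" using Py' unfolding m_def by simp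
      then show "r i + \<mu> * (\<Sum>j<2*M+1. Smat M w $$ (i,j) * dd M h T j * r j) = 1"
        unfolding P_def m_def r_def by simp
    qed
    define sr where "sr = (\<Sum>i<m. dd M h T i * r i)"
    define A where "A = (\<Sum>i<m. dd M h T i * r i ^ 2)"
    have q: "A + \<mu> * (1 - w) / 2 * sr^2 = sr"
      using quad[OF req] unfolding A_def sr_def m_def by simp
    have "\<exists>i<m. r i \<noteq> 0"
    proof (rule ccontr)
      assume "\<not> ?thesis"
      then have "r 0 = 0" "\<forall>j<m. r j = 0" unfolding m_def by auto
      then show False using req by (auto simp: m_def)
    qed
    then obtain i0 where i0: "i0 < m" "r i0 \<noteq> 0" by auto
    have ddp: "\<And>j. dd M h T j > 0" using dd_pos[OF hT] by blast
    have Apos: "A > 0" unfolding A_def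
    proof (rule sum_pos2[of _ i0])
      show "0 < dd M h T i0 * (r i0)\<^sup>2" using ddp[of i0] i0 by simp
      show "\<And>i. i \<in> {..<m} \<Longrightarrow> 0 \<le> dd M h T i * (r i)\<^sup>2" using ddp by (simp add: less_imp_le)
    qed (use i0 in auto)
    have nn: "0 \<le> \<mu> * (1 - w) / 2 * sr^2" using mu w by simp
    have srpos: "sr > 0" using q Apos nn by linarith
    have "\<mu> * (1 - w) / 2 * sr^2 < sr" using q Apos by linarith
    then have "\<mu> * (1 - w) / 2 * sr * sr < 1 * sr" by (simp add: power2_eq_square mult.assoc)
    then have b: "(1 - w) * (\<mu> * sr / 2) < 1" using srpos by (simp only: mult_less_cancel_right) (simp add: algebra_simps)
    have "s = \<kappa> * of_real sr"
    proof -
      have "s = (\<Sum>j<m. \<kappa> * (of_real (dd M h T j) * y' j))"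
        unfolding s_def y'_def using k0 by (intro sum.cong refl) simp
      also have "\<dots> = \<kappa> * (\<Sum>j<m. of_real (dd M h T j * r j))"
        by (simp add: sum_distrib_left yr)
      finally show ?thesis unfolding sr_def by simp
    qed
    then have "\<kappa> + of_real (\<mu>*w/2) * (\<kappa> * of_real sr) = z * \<kappa>"
      using eq2[of 0] Pk[of 0] by (simp add: m_def)
    then have "\<kappa> * (1 + of_real (\<mu>*w/2 * sr)) = \<kappa> * z" by (simp add: algebra_simps)
    then have "1 + of_real (\<mu>*w/2 * sr) = z" using k0 mult_left_cancel by blast
    then have zv: "z = of_real (1 + w * (\<mu> * sr / 2))" by (simp add: algebra_simps)
    have t0: "\<mu> * sr / 2 \<ge> 0" using mu srpos by simp
    show ?thesis unfolding zv
      using range_ineq[OF w t0 b] w t0 by (intro imageI) auto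
  qed
qed

lemma idx_lt: fixes i k m n :: nat assumes "i < m" "k < n" shows "i*n+k < m*n"
proof -
  have "i*n+k < i*n + n" using assms by simp
  also have "\<dots> = Suc i * n" by simp
  also have "\<dots> \<le> m*n" using assms by (intro mult_right_mono) auto
  finally show ?thesis .
qed

lemma kron_index:
  assumes "R \<in> carrier_mat m m" "K \<in> carrier_mat n n" "i < m" "k < n" "j < m" "l < n"
  shows "kron R K $$ (i*n+k, j*n+l) = R $$ (i,j) * K $$ (k,l)"
proof -
  have a: "i*n+k < m*n" "j*n+l < m*n" using idx_lt[OF assms(3,4)] idx_lt[OF assms(5,6)] by auto
  show ?thesis using assms a by (simp add: kron_def)
qed

lemma kron_mv:
  fixes R K :: "'a::comm_ring_1 mat"
  assumes R: "R \<in> carrier_mat m m" and K: "K \<in> carrier_mat n n" and v: "v \<in> carrier_vec (m*n)"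
    and i: "i < m" and k: "k < n"
  shows "((1\<^sub>m (m*n) - kron R K) *\<^sub>v v) $ (i*n+k)
       = v $ (i*n+k) - (\<Sum>j<m. R $$ (i,j) * (\<Sum>l<n. K $$ (k,l) * v $ (j*n+l)))"
proof -
  define Q where "Q = 1\<^sub>m (m*n) - kron R K"
  have kc: "kron R K \<in> carrier_mat (m*n) (m*n)" using R K by (simp add: kron_def)
  have Qc: "Q \<in> carrier_mat (m*n) (m*n)" unfolding Q_def carrier_mat_def using kc by auto
  have p: "i*n+k < m*n" by (rule idx_lt[OF i k])
  have dv: "dim_vec v = m*n" using v by simp
  have "(Q *\<^sub>v v) $ (i*n+k) = row Q (i*n+k) \<bullet> v"
    using Qc p by (simp only: index_mult_mat_vec carrier_matD)
  also have "\<dots> = (\<Sum>r<m*n. row Q (i*n+k) $ r * v $ r)"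
    by (simp only: scalar_prod_def dv lessThan_atLeast0)
  also have "\<dots> = (\<Sum>r<m*n. Q $$ (i*n+k, r) * v $ r)"
    using Qc p by (intro sum.cong refl) simp
  also have "\<dots> = (\<Sum>r<m*n. (if i*n+k = r then v $ r else 0) - kron R K $$ (i*n+k, r) * v $ r)"
    unfolding Q_def using kc p by (intro sum.cong refl) (auto simp: algebra_simps)
  also have "\<dots> = v $ (i*n+k) - (\<Sum>r<m*n. kron R K $$ (i*n+k, r) * v $ r)"
    using p by (simp add: sum_subtractf)
  also have "(\<Sum>r<m*n. kron R K $$ (i*n+k, r) * v $ r) = (\<Sum>j<m. \<Sum>l<n. kron R K $$ (i*n+k, j*n+l) * v $ (j*n+l))"
    by (rule sum_split_mn)
  also have "\<dots> = (\<Sum>j<m. \<Sum>l<n. R $$ (i,j) * (K $$ (k,l) * v $ (j*n+l)))"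
    using R K i k by (intro sum.cong refl) (simp add: kron_index)
  also have "\<dots> = (\<Sum>j<m. R $$ (i,j) * (\<Sum>l<n. K $$ (k,l) * v $ (j*n+l)))"
    by (simp add: sum_distrib_left)
  finally show ?thesis unfolding Q_def .
qed

lemma mat_mult_index:
  assumes "A \<in> carrier_mat a b" "B \<in> carrier_mat b c" "i < a" "j < c"
  shows "(A * B) $$ (i,j) = (\<Sum>k<b. A $$ (i,k) * B $$ (k,j))"
  using assms by (simp add: scalar_prod_def lessThan_atLeast0)

lemma sum_swap3:
  "(\<Sum>k\<in>A. w k * (\<Sum>j\<in>B. r j * (\<Sum>l\<in>C. c k l * x j l)))
 = (\<Sum>j\<in>B. r j * (\<Sum>l\<in>C. (\<Sum>k\<in>A. w k * c k l) * x j l))" for w r :: "_ \<Rightarrow> 'a::comm_semiring_1"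
proof -
  have "(\<Sum>k\<in>A. w k * (\<Sum>j\<in>B. r j * (\<Sum>l\<in>C. c k l * x j l)))
      = (\<Sum>k\<in>A. \<Sum>j\<in>B. \<Sum>l\<in>C. w k * r j * c k l * x j l)"
    by (simp add: sum_distrib_left mult.assoc)
  also have "\<dots> = (\<Sum>j\<in>B. \<Sum>k\<in>A. \<Sum>l\<in>C. w k * r j * c k l * x j l)"
    by (rule sum.swap)
  also have "\<dots> = (\<Sum>j\<in>B. \<Sum>l\<in>C. \<Sum>k\<in>A. w k * r j * c k l * x j l)"
    by (intro sum.cong refl sum.swap)
  also have "\<dots> = (\<Sum>j\<in>B. r j * (\<Sum>l\<in>C. (\<Sum>k\<in>A. w k * c k l) * x j l))"
    by (simp add: sum_distrib_left sum_distrib_right mult_ac)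
  finally show ?thesis .
qed

lemma reduce:
  fixes R1 R2 K \<Lambda> V W :: "'a::field mat"
  assumes R1: "R1 \<in> carrier_mat m m" and R2: "R2 \<in> carrier_mat m m"
    and K: "K \<in> carrier_mat n n" and L: "\<Lambda> \<in> carrier_mat n n"
    and V: "V \<in> carrier_mat n n" and W: "W \<in> carrier_mat n n"
    and KV: "K = V * \<Lambda> * W" and WV: "W * V = 1\<^sub>m n" and VW: "V * W = 1\<^sub>m n"
    and dg: "diagonal_mat \<Lambda>"
    and v: "v \<in> carrier_vec (m*n)" and nz: "v \<noteq> 0\<^sub>v (m*n)"
    and eq: "(1\<^sub>m (m*n) - kron R1 K) *\<^sub>v v = z \<cdot>\<^sub>v ((1\<^sub>m (m*n) - kron R2 K) *\<^sub>v v)"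
  shows "\<exists>l<n. \<exists>y. (\<exists>j<m. y j \<noteq> 0) \<and>
     (\<forall>i<m. y i - \<Lambda> $$ (l,l) * (\<Sum>j<m. R1 $$ (i,j) * y j)
          = z * (y i - \<Lambda> $$ (l,l) * (\<Sum>j<m. R2 $$ (i,j) * y j)))"
proof -
  define X where "X j k = v $ (j*n+k)" for j k
  define Y where "Y j l = (\<Sum>k<n. W $$ (l,k) * X j k)" for j l
  have WK: "W * K = \<Lambda> * W"
  proof -
    have "W * K = W * (V * \<Lambda> * W)" by (simp add: KV)
    also have "\<dots> = (W * V) * \<Lambda> * W"
      using V W L by (simp add: assoc_mult_mat[of _ n n _ n _ n])
    also have "\<dots> = \<Lambda> * W" using WV L by simp
    finally show ?thesis .
  qed
  have WKe: "(\<Sum>k<n. W $$ (l,k) * K $$ (k,k')) = \<Lambda> $$ (l,l) * W $$ (l,k')" if l: "l < n" and k': "k' < n" for l k'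
  proof -
    have "(\<Sum>k<n. W $$ (l,k) * K $$ (k,k')) = (W * K) $$ (l,k')"
      using mat_mult_index[OF W K l k'] by simp
    also have "\<dots> = (\<Lambda> * W) $$ (l,k')" by (simp add: WK)
    also have "\<dots> = (\<Sum>r<n. \<Lambda> $$ (l,r) * W $$ (r,k'))" by (rule mat_mult_index[OF L W l k'])
    also have "\<dots> = (\<Sum>r<n. if r = l then \<Lambda> $$ (l,l) * W $$ (l,k') else 0)"
      using dg L l unfolding diagonal_mat_def by (intro sum.cong refl) auto
    also have "\<dots> = \<Lambda> $$ (l,l) * W $$ (l,k')" using l by simp
    finally show ?thesis .
  qed
  have E: "X i k - (\<Sum>j<m. R1 $$ (i,j) * (\<Sum>l<n. K $$ (k,l) * X j l))
      = z * (X i k - (\<Sum>j<m. R2 $$ (i,j) * (\<Sum>l<n. K $$ (k,l) * X j l)))" if i: "i < m" and k: "k < n" for i k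
  proof -
    have p: "i*n+k < m*n" by (rule idx_lt[OF i k])
    have "((1\<^sub>m (m*n) - kron R1 K) *\<^sub>v v) $ (i*n+k) = (z \<cdot>\<^sub>v ((1\<^sub>m (m*n) - kron R2 K) *\<^sub>v v)) $ (i*n+k)"
      by (simp add: eq)
    also have "\<dots> = z * (((1\<^sub>m (m*n) - kron R2 K) *\<^sub>v v) $ (i*n+k))"
      using p R2 K by (simp add: kron_def)
    finally show ?thesis unfolding X_def kron_mv[OF R1 K v i k] kron_mv[OF R2 K v i k] .
  qed
  have TR: "(\<Sum>k<n. W $$ (l,k) * (X i k - (\<Sum>j<m. R $$ (i,j) * (\<Sum>l'<n. K $$ (k,l') * X j l'))))
      = Y i l - \<Lambda> $$ (l,l) * (\<Sum>j<m. R $$ (i,j) * Y j l)" if l: "l < n" for R i l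
  proof -
    have "(\<Sum>k<n. W $$ (l,k) * (\<Sum>j<m. R $$ (i,j) * (\<Sum>l'<n. K $$ (k,l') * X j l')))
       = (\<Sum>j<m. R $$ (i,j) * (\<Sum>l'<n. (\<Sum>k<n. W $$ (l,k) * K $$ (k,l')) * X j l'))"
      by (rule sum_swap3)
    also have "\<dots> = (\<Sum>j<m. R $$ (i,j) * (\<Sum>l'<n. \<Lambda> $$ (l,l) * W $$ (l,l') * X j l'))"
      using WKe[OF l] by (intro sum.cong refl) auto
    also have "\<dots> = \<Lambda> $$ (l,l) * (\<Sum>j<m. R $$ (i,j) * Y j l)"
      unfolding Y_def by (simp add: sum_distrib_left mult_ac)
    finally show ?thesis unfolding Y_def by (simp add: right_diff_distrib sum_subtractf)
  qed
  have col: "Y i l - \<Lambda> $$ (l,l) * (\<Sum>j<m. R1 $$ (i,j) * Y j l)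
      = z * (Y i l - \<Lambda> $$ (l,l) * (\<Sum>j<m. R2 $$ (i,j) * Y j l))" if i: "i < m" and l: "l < n" for i l
  proof -
    have "(\<Sum>k<n. W $$ (l,k) * (X i k - (\<Sum>j<m. R1 $$ (i,j) * (\<Sum>l'<n. K $$ (k,l') * X j l'))))
       = (\<Sum>k<n. W $$ (l,k) * (z * (X i k - (\<Sum>j<m. R2 $$ (i,j) * (\<Sum>l'<n. K $$ (k,l') * X j l')))))"
      using E[OF i] by (intro sum.cong refl) auto
    also have "\<dots> = z * (\<Sum>k<n. W $$ (l,k) * (X i k - (\<Sum>j<m. R2 $$ (i,j) * (\<Sum>l'<n. K $$ (k,l') * X j l'))))"
      by (simp add: sum_distrib_left mult_ac)
    finally show ?thesis unfolding TR[OF l] .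
  qed
  obtain p where p: "p < m*n" "v $ p \<noteq> 0" using nz v by (auto simp: vec_eq_iff)
  have n0: "n > 0" using p(1) by (cases n) auto
  define j0 where "j0 = p div n"
  define k0 where "k0 = p mod n"
  have j0: "j0 < m" using p(1) unfolding j0_def by (simp add: less_mult_imp_div_less)
  have k0: "k0 < n" using n0 unfolding k0_def by simp
  have jk: "j0*n + k0 = p" unfolding j0_def k0_def by (rule div_mult_mod_eq)
  have X0: "X j0 k0 \<noteq> 0" using p unfolding X_def jk by simp
  have "X j0 k0 = (\<Sum>l<n. V $$ (k0,l) * Y j0 l)"
  proof -
    have "(\<Sum>l<n. V $$ (k0,l) * Y j0 l) = (\<Sum>k'<n. (\<Sum>l<n. V $$ (k0,l) * W $$ (l,k')) * X j0 k')"
    proof -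
      have "(\<Sum>l<n. V $$ (k0,l) * Y j0 l) = (\<Sum>l<n. \<Sum>k'<n. V $$ (k0,l) * W $$ (l,k') * X j0 k')"
        unfolding Y_def by (simp add: sum_distrib_left mult.assoc)
      also have "\<dots> = (\<Sum>k'<n. \<Sum>l<n. V $$ (k0,l) * W $$ (l,k') * X j0 k')" by (rule sum.swap)
      also have "\<dots> = (\<Sum>k'<n. (\<Sum>l<n. V $$ (k0,l) * W $$ (l,k')) * X j0 k')" by (simp add: sum_distrib_right)
      finally show ?thesis .
    qed
    also have "\<dots> = (\<Sum>k'<n. (if k0 = k' then X j0 k' else 0))"
    proof (intro sum.cong refl)
      fix k' assume "k' \<in> {..<n}"
      then have "(\<Sum>l<n. V $$ (k0,l) * W $$ (l,k')) = (V * W) $$ (k0,k')"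
        using mat_mult_index[OF V W k0, of k'] by simp
      then show "(\<Sum>l<n. V $$ (k0,l) * W $$ (l,k')) * X j0 k' = (if k0 = k' then X j0 k' else 0)"
        using \<open>k' \<in> {..<n}\<close> k0 VW by simp
    qed
    also have "\<dots> = X j0 k0" using k0 by simp
    finally show ?thesis by simp
  qed
  with X0 obtain l0 where l0: "l0 < n" "Y j0 l0 \<noteq> 0"
    by (metis (no_types, lifting) lessThan_iff mult_zero_right sum.neutral)
  show ?thesis
    by (rule exI[of _ l0], rule conjI[OF l0(1)], rule exI[of _ "\<lambda>j. Y j l0"])
       (use j0 l0 col in auto)
qed



lemma sylvester:
  fixes G H :: "'a::idom mat" and x :: 'a
  assumes G: "G \<in> carrier_mat N n" and H: "H \<in> carrier_mat n N"
  shows "x^n * det (x \<cdot>\<^sub>m 1\<^sub>m N - G * H) = x^N * det (x \<cdot>\<^sub>m 1\<^sub>m n - H * G)"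
proof -
  define Mb where "Mb = four_block_mat (x \<cdot>\<^sub>m 1\<^sub>m N) G H (1\<^sub>m n)"
  have Mbc: "Mb \<in> carrier_mat (N+n) (N+n)" unfolding Mb_def using G H by auto
  define B1 where "B1 = four_block_mat (1\<^sub>m N) (0\<^sub>m N n) (- H) (1\<^sub>m n)"
  have B1c: "B1 \<in> carrier_mat (N+n) (N+n)" unfolding B1_def using G H by auto
  define B2 where "B2 = four_block_mat (1\<^sub>m N) (0\<^sub>m N n) (- H) (x \<cdot>\<^sub>m 1\<^sub>m n)"
  have B2c: "B2 \<in> carrier_mat (N+n) (N+n)" unfolding B2_def using G H by auto
  have GH: "G * H \<in> carrier_mat N N" and HG: "H * G \<in> carrier_mat n n" using G H by auto
  have p1: "Mb * B1 = four_block_mat (x \<cdot>\<^sub>m 1\<^sub>m N - G * H) G (0\<^sub>m n N) (1\<^sub>m n)"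
    unfolding Mb_def B1_def
  proof (subst mult_four_block_mat[where ?nr1.0=N and ?n1.0=N and ?n2.0=n and ?nr2.0=n and ?nc1.0=N and ?nc2.0=n], insert G H, auto intro!: cong_four_block_mat)
  qed
  have a: "H * (x \<cdot>\<^sub>m 1\<^sub>m N) = x \<cdot>\<^sub>m H" using mult_smult_distrib[OF H one_carrier_mat, where k=x] H by simp
  have b: "x \<cdot>\<^sub>m 1\<^sub>m n * H = x \<cdot>\<^sub>m H" using mult_smult_assoc_mat[OF one_carrier_mat H, where k=x] H by simp
  have p2: "B2 * Mb = four_block_mat (x \<cdot>\<^sub>m 1\<^sub>m N) G (0\<^sub>m n N) (x \<cdot>\<^sub>m 1\<^sub>m n - H * G)"
    unfolding Mb_def B2_def
    by (subst mult_four_block_mat[where ?nr1.0=N and ?n1.0=N and ?n2.0=n and ?nr2.0=n and ?nc1.0=N and ?nc2.0=n],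
       insert G H, auto intro!: cong_four_block_mat simp: a b)
  have d1: "det (Mb * B1) = det (x \<cdot>\<^sub>m 1\<^sub>m N - G * H)"
    unfolding p1 by (subst det_four_block_mat_lower_left_zero[of _ N _ n]) (use G H in auto)
  have dB1: "det B1 = 1"
    unfolding B1_def by (subst det_four_block_mat_upper_right_zero[of _ N _ n]) (use G H in auto)
  have dB2: "det B2 = x^n"
    unfolding B2_def by (subst det_four_block_mat_upper_right_zero[of _ N _ n]) (use G H in auto)
  have d2: "det (B2 * Mb) = x^N * det (x \<cdot>\<^sub>m 1\<^sub>m n - H * G)"
    unfolding p2 by (subst det_four_block_mat_lower_left_zero[of _ N _ n]) (use G H in auto)
  have "det Mb = det (x \<cdot>\<^sub>m 1\<^sub>m N - G * H)" using d1 det_mult[OF Mbc B1c] dB1 by simp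
  moreover have "x^n * det Mb = x^N * det (x \<cdot>\<^sub>m 1\<^sub>m n - H * G)" using d2 det_mult[OF B2c Mbc] dB2 by simp
  ultimately show ?thesis by simp
qed
lemma msum_le: fixes M :: "'a multiset" assumes "finite B" shows "(\<Sum>z\<in>B. count M z) \<le> size M"
proof (induct M)
  case empty then show ?case by simp
next
  case (add a M)
  have "(\<Sum>z\<in>B. count (add_mset a M) z) = (\<Sum>z\<in>B. count M z + (if z = a then 1 else 0))"
    by (intro sum.cong refl) auto
  also have "\<dots> = (\<Sum>z\<in>B. count M z) + (\<Sum>z\<in>B. (if z = a then 1 else 0))"
    by (rule sum.distrib)
  also have "(\<Sum>z\<in>B. (if z = a then 1 else 0)) \<le> (1::nat)"
    using assms by (simp add: sum.delta')
  finally show ?case using add by simp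
qed

lemma poly_aux: "pCons (-1 - g) 1 = pCons 0 1 - 1 - [:g::complex:]"
  by (simp add: poly_eq_iff coeff_pCons split: nat.split)

lemma count_bound:
  fixes C G H :: "complex mat"
  assumes C: "C \<in> carrier_mat N N" and G: "G \<in> carrier_mat N n" and H: "H \<in> carrier_mat n N"
    and CGH: "C = 1\<^sub>m N + G * H"
  shows "(\<Sum>z\<in>{z. eigenvalue C z \<and> z \<noteq> 1}. order z (char_poly C)) \<le> n"
proof -
  define Gp where "Gp = map_mat (\<lambda>a. [:a:]) G"
  define Hp where "Hp = map_mat (\<lambda>a. [:a:]) H"
  have Gp: "Gp \<in> carrier_mat N n" and Hp: "Hp \<in> carrier_mat n N" using G H by (auto simp: Gp_def Hp_def)
  let ?y = "[:-1, 1:] :: complex poly"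
  have cpm: "char_poly_matrix C = ?y \<cdot>\<^sub>m 1\<^sub>m N - Gp * Hp"
  proof (rule eq_matI)
    fix i j assume i: "i < dim_row (?y \<cdot>\<^sub>m 1\<^sub>m N - Gp * Hp)" and j: "j < dim_col (?y \<cdot>\<^sub>m 1\<^sub>m N - Gp * Hp)"
    then have i: "i < N" and j: "j < N" using Gp Hp by auto
    have gh: "(Gp * Hp) $$ (i,j) = [:(G * H) $$ (i,j):]"
      using i j G H by (simp add: Gp_def Hp_def scalar_prod_def mult_to_poly sum_to_poly mult.commute)
    have c: "C $$ (i,j) = (if i = j then 1 else 0) + (G * H) $$ (i,j)" using CGH i j G H by simp
    show "char_poly_matrix C $$ (i,j) = (?y \<cdot>\<^sub>m 1\<^sub>m N - Gp * Hp) $$ (i,j)"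
      using i j C Gp Hp unfolding char_poly_matrix_def by (simp add: gh c poly_aux)
  qed (use C Gp Hp in \<open>auto simp: char_poly_matrix_def\<close>)
  have syl: "?y^n * char_poly C = ?y^N * det (?y \<cdot>\<^sub>m 1\<^sub>m n - Hp * Gp)"
    unfolding char_poly_def cpm by (rule sylvester[OF Gp Hp])
  have dm: "degree (char_poly C) = N \<and> coeff (char_poly C) N = 1" by (rule degree_monic_char_poly[OF C])
  then have cp0: "char_poly C \<noteq> 0" by auto
  have ord1: "N - n \<le> order 1 (char_poly C)"
  proof (cases "N \<le> n")
    case True then show ?thesis by simp
  next
    case False
    then have "?y^N = ?y^n * ?y^(N-n)" by (simp add: power_add[symmetric])
    then have "?y^n * ?y^(N-n) dvd ?y^n * char_poly C" using syl by (metis dvd_triv_left)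
    then have "?y^(N-n) dvd char_poly C" by (subst (asm) dvd_mult_cancel_left) auto
    then show ?thesis using cp0 order_divides[of 1 "N-n" "char_poly C"] by simp
  qed
  let ?B = "{z. eigenvalue C z \<and> z \<noteq> 1}"
  show ?thesis
  proof (cases "finite ?B")
    case False then show ?thesis by simp
  next
    case True
    have "(\<Sum>z\<in>insert 1 ?B. count (proots (char_poly C)) z) \<le> size (proots (char_poly C))"
      using True by (intro msum_le) auto
    also have "\<dots> \<le> N" using size_proots_le[of "char_poly C"] dm by simp
    finally have "order 1 (char_poly C) + (\<Sum>z\<in>?B. order z (char_poly C)) \<le> N"
      using True cp0 by (simp add: sum.insert)
    then show ?thesis using ord1 by linarith
  qed
qed


lemma kron_entry:
  assumes "X \<in> carrier_mat m m" "K \<in> carrier_mat n n" "r < m*n" "c < m*n"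
  shows "kron X K $$ (r,c) = X $$ (r div n, c div n) * K $$ (r mod n, c mod n)"
  using assms by (simp add: kron_def)

lemma kron_carrier: "X \<in> carrier_mat m m \<Longrightarrow> K \<in> carrier_mat n n \<Longrightarrow> kron X K \<in> carrier_mat (m*n) (m*n)"
  by (simp add: kron_def)

lemma map_one_kron:
  fixes X K :: "real mat"
  assumes X: "X \<in> carrier_mat m m" and K: "K \<in> carrier_mat n n"
  shows "map_mat complex_of_real (1\<^sub>m (m*n) - kron X K)
       = 1\<^sub>m (m*n) - kron (map_mat complex_of_real X) (map_mat complex_of_real K)"
proof (rule eq_matI)
  fix r c assume r: "r < dim_row (1\<^sub>m (m*n) - kron (map_mat complex_of_real X) (map_mat complex_of_real K))"
    and c: "c < dim_col (1\<^sub>m (m*n) - kron (map_mat complex_of_real X) (map_mat complex_of_real K))"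
  then have r: "r < m*n" and c: "c < m*n" using X K by (auto simp: kron_def)
  have rd: "r div n < m" "c div n < m" using r c by (auto simp: less_mult_imp_div_less)
  have n0: "n > 0" using r by (cases n) auto
  show "map_mat complex_of_real (1\<^sub>m (m*n) - kron X K) $$ (r,c)
     = (1\<^sub>m (m*n) - kron (map_mat complex_of_real X) (map_mat complex_of_real K)) $$ (r,c)"
    using r c X K rd n0 kron_carrier[OF X K]
      kron_carrier[of "map_mat complex_of_real X" m "map_mat complex_of_real K" n]
      kron_entry[OF X K r c] kron_entry[of "map_mat complex_of_real X" m "map_mat complex_of_real K" n r c]
    by simp
qed (use X K in \<open>auto simp: kron_def\<close>)

theorem theorem3p4:
  fixes M n :: nat and h T \<omega> :: real and K :: "real mat"
  assumes "M \<ge> 1" and "h > 0" and "T > 0"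
    and "0 < \<omega>" and "\<omega> < 1"
    and K: "K \<in> carrier_mat n n"
    and diag: "\<exists>\<Lambda>. diagonal_mat \<Lambda> \<and> similar_mat K \<Lambda> \<and> (\<forall>i<n. \<Lambda> $$ (i, i) < 0)"
  shows
    "let m = 2*M+1;
         \<A> = 1\<^sub>m (m*n) - kron (Iinv M * Dmat M h T) K;
         \<P> = 1\<^sub>m (m*n) - kron (Smat M \<omega> * Dmat M h T) K;
         C = map_mat complex_of_real (mat_inv \<P> * \<A>)
     in invertible_mat \<P>
        \<and> (\<Sum>z\<in>{z. eigenvalue C z \<and> z \<noteq> 1}. alg_mult C z) \<le> n
        \<and> {z. eigenvalue C z} \<subseteq> complex_of_real ` {1..<1/(1-\<omega>)}"
proof -
  note hT = assms(2,3)
  note w = assms(4,5)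
  define m where "m = 2*M+1"
  define N where "N = m*n"
  define ID where "ID = Iinv M * Dmat M h T"
  define SD where "SD = Smat M \<omega> * Dmat M h T"
  define A where "A = 1\<^sub>m (m*n) - kron ID K"
  define P where "P = 1\<^sub>m (m*n) - kron SD K"
  define Pinv where "Pinv = mat_inv P"
  define C where "C = map_mat complex_of_real (Pinv * A)"
  obtain \<Lambda> where dg: "diagonal_mat \<Lambda>" and sim: "similar_mat K \<Lambda>" and neg: "\<forall>i<n. \<Lambda> $$ (i, i) < 0"
    using diag by blast
  obtain V W where sw: "similar_mat_wit K \<Lambda> V W" using sim unfolding similar_mat_def by blast
  have L: "\<Lambda> \<in> carrier_mat n n" and V: "V \<in> carrier_mat n n" and W: "W \<in> carrier_mat n n"
    and VW: "V * W = 1\<^sub>m n" and WV: "W * V = 1\<^sub>m n" and KV: "K = V * \<Lambda> * W"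
    using sw K unfolding similar_mat_wit_def Let_def by auto
  have IDc: "ID \<in> carrier_mat m m" unfolding ID_def m_def by (rule mult_carrier_mat[OF Iinv_carrier Dmat_carrier])
  have SDc: "SD \<in> carrier_mat m m" unfolding SD_def m_def by (rule mult_carrier_mat[OF Smat_carrier Dmat_carrier])
  have IDe: "i < m \<Longrightarrow> j < m \<Longrightarrow> ID $$ (i,j) = Iinv M $$ (i,j) * dd M h T j" for i j
    unfolding ID_def m_def by (rule mult_diag_index[OF Iinv_carrier])
  have SDe: "i < m \<Longrightarrow> j < m \<Longrightarrow> SD $$ (i,j) = Smat M \<omega> $$ (i,j) * dd M h T j" for i j
    unfolding SD_def m_def by (rule mult_diag_index[OF Smat_carrier])
  have Ac: "A \<in> carrier_mat N N" unfolding A_def N_def using kron_carrier[OF IDc K] by auto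
  have Pc: "P \<in> carrier_mat N N" unfolding P_def N_def using kron_carrier[OF SDc K] by auto
  have wle: "\<omega> \<le> 1" using w by simp
  have detP: "det P \<noteq> 0"
  proof
    assume "det P = 0"
    then obtain v where v: "v \<in> carrier_vec N" "v \<noteq> 0\<^sub>v N" "P *\<^sub>v v = 0\<^sub>v N"
      using det_0_iff_vec_prod_zero[OF Pc] by blast
    have eq: "(1\<^sub>m (m*n) - kron SD K) *\<^sub>v v = 0 \<cdot>\<^sub>v ((1\<^sub>m (m*n) - kron SD K) *\<^sub>v v)"
      using v(3) unfolding P_def by (auto simp: vec_eq_iff)
    obtain l y where l: "l < n" and ynz: "\<exists>j<m. y j \<noteq> 0"
      and ye: "\<forall>i<m. y i - \<Lambda> $$ (l,l) * (\<Sum>j<m. SD $$ (i,j) * y j) = 0"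
      using reduce[OF SDc SDc K L V W KV WV VW dg _ _ eq] v(1,2) unfolding N_def by auto
    define \<mu> where "\<mu> = - \<Lambda> $$ (l,l)"
    have mu: "\<mu> > 0" using neg l unfolding \<mu>_def by simp
    have "\<forall>i<2*M+1. y i + \<mu> * (\<Sum>j<2*M+1. Smat M \<omega> $$ (i,j) * dd M h T j * y j) = 0"
    proof (intro allI impI)
      fix i assume i: "i < 2*M+1"
      have s: "(\<Sum>j<m. SD $$ (i,j) * y j) = (\<Sum>j<2*M+1. Smat M \<omega> $$ (i,j) * dd M h T j * y j)"
        using i unfolding m_def by (intro sum.cong refl) (simp add: SDe m_def)
      have yi: "y i - \<Lambda> $$ (l,l) * (\<Sum>j<m. SD $$ (i,j) * y j) = 0"
        using ye i unfolding m_def by blast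
      have "y i + \<mu> * (\<Sum>j<2*M+1. Smat M \<omega> $$ (i,j) * dd M h T j * y j)
          = y i - \<Lambda> $$ (l,l) * (\<Sum>j<m. SD $$ (i,j) * y j)"
        unfolding s \<mu>_def by (simp only: mult_minus_left diff_conv_add_uminus)
      with yi show "y i + \<mu> * (\<Sum>j<2*M+1. Smat M \<omega> $$ (i,j) * dd M h T j * y j) = 0"
        by (simp only:)
    qed
    from col_real_inj[OF hT mu wle this] ynz show False unfolding m_def by auto
  qed
  have "P \<in> Units (ring_mat TYPE(real) N undefined)" by (rule det_non_zero_imp_unit[OF Pc detP])
  then obtain B where Bc: "B \<in> carrier_mat N N" and PB: "P * B = 1\<^sub>m N" and BP: "B * P = 1\<^sub>m N"
    unfolding Units_def ring_mat_def by auto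
  have invP: "invertible_mat P"
    unfolding invertible_mat_def inverts_mat_def using Pc Bc PB BP by (auto intro!: exI[of _ B])
  have "\<exists>B. B \<in> carrier_mat (dim_row P) (dim_row P) \<and> inverts_mat P B \<and> inverts_mat B P"
    using Pc Bc PB BP unfolding inverts_mat_def by (auto intro!: exI[of _ B])
  from someI_ex[OF this] have Pinvc: "Pinv \<in> carrier_mat N N" and PPinv: "P * Pinv = 1\<^sub>m N"
    and PinvP: "Pinv * P = 1\<^sub>m N"
    using Pc unfolding Pinv_def mat_inv_def inverts_mat_def by auto
  have Cc: "C \<in> carrier_mat N N" unfolding C_def using Pinvc Ac by auto
  define G0 where "G0 = mat N n (\<lambda>(r,l). - (\<omega>/2) * K $$ (r mod n, l))"
  define H0 where "H0 = mat n N (\<lambda>(l,c). if c mod n = l then dd M h T (c div n) else 0)"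
  have G0c: "G0 \<in> carrier_mat N n" and H0c: "H0 \<in> carrier_mat n N" unfolding G0_def H0_def by auto
  have AP: "A = P + G0 * H0"
  proof (rule eq_matI)
    fix r c assume "r < dim_row (P + G0 * H0)" "c < dim_col (P + G0 * H0)"
    then have r: "r < N" and c: "c < N" using Pc G0c H0c by auto
    have n0: "n > 0" using r unfolding N_def by (cases n) auto
    have rd: "r div n < m" "c div n < m" using r c unfolding N_def by (auto simp: less_mult_imp_div_less)
    have cm: "c mod n < n" using n0 by simp
    have "(G0 * H0) $$ (r,c) = (\<Sum>l<n. G0 $$ (r,l) * H0 $$ (l,c))"
      by (rule mat_mult_index[OF G0c H0c r c])
    also have "\<dots> = (\<Sum>l<n. if l = c mod n then - (\<omega>/2) * K $$ (r mod n, c mod n) * dd M h T (c div n) else 0)"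
      using r c unfolding G0_def H0_def by (intro sum.cong refl) auto
    also have "\<dots> = - (\<omega>/2) * K $$ (r mod n, c mod n) * dd M h T (c div n)" using cm by simp
    finally have gh: "(G0 * H0) $$ (r,c) = - (\<omega>/2) * K $$ (r mod n, c mod n) * dd M h T (c div n)" .
    have I: "Iinv M $$ (r div n, c div n) = Smat M \<omega> $$ (r div n, c div n) + \<omega>/2"
      using rd unfolding m_def by (simp add: Iinv_index Smat_index)
    show "A $$ (r,c) = (P + G0 * H0) $$ (r,c)"
      using r c rd Pc G0c H0c kron_carrier[OF IDc K] kron_carrier[OF SDc K] unfolding A_def P_def N_def
      by (simp add: kron_entry[OF IDc K] kron_entry[OF SDc K] gh IDe SDe I algebra_simps)
  qed (use Ac Pc G0c H0c in auto)
  have PiA: "Pinv * A = 1\<^sub>m N + (Pinv * G0) * H0"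
  proof -
    have "Pinv * A = Pinv * P + Pinv * (G0 * H0)"
      unfolding AP using Pinvc Pc G0c H0c by (simp add: mult_add_distrib_mat)
    also have "\<dots> = 1\<^sub>m N + (Pinv * G0) * H0"
      using Pinvc G0c H0c by (simp add: PinvP assoc_mult_mat[of _ N N _ n _ N])
    finally show ?thesis .
  qed
  define Gc where "Gc = map_mat complex_of_real (Pinv * G0)"
  define Hc where "Hc = map_mat complex_of_real H0"
  have Gcc: "Gc \<in> carrier_mat N n" and Hcc: "Hc \<in> carrier_mat n N" using Pinvc G0c H0c
    unfolding Gc_def Hc_def by auto
  have CGH: "C = 1\<^sub>m N + Gc * Hc"
  proof -
    have "C = map_mat complex_of_real (1\<^sub>m N + (Pinv * G0) * H0)" unfolding C_def PiA ..
    also have "\<dots> = 1\<^sub>m N + map_mat complex_of_real ((Pinv * G0) * H0)"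
      using Pinvc G0c H0c by (intro eq_matI) auto
    also have "map_mat complex_of_real ((Pinv * G0) * H0) = Gc * Hc"
      unfolding Gc_def Hc_def using Pinvc G0c H0c by (intro of_real_hom.mat_hom_mult) auto
    finally show ?thesis .
  qed
  have count: "(\<Sum>z\<in>{z. eigenvalue C z \<and> z \<noteq> 1}. alg_mult C z) \<le> n"
    unfolding alg_mult_def by (rule count_bound[OF Cc Gcc Hcc CGH])
  have eig: "{z. eigenvalue C z} \<subseteq> complex_of_real ` {1..<1/(1-\<omega>)}"
  proof
    fix z assume "z \<in> {z. eigenvalue C z}"
    then obtain v where v: "v \<in> carrier_vec N" "v \<noteq> 0\<^sub>v N" "C *\<^sub>v v = z \<cdot>\<^sub>v v"
      using Cc unfolding eigenvalue_def eigenvector_def by auto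
    let ?h = "map_mat complex_of_real"
    have hPc: "?h P \<in> carrier_mat N N" and hAc: "?h A \<in> carrier_mat N N" using Pc Ac by auto
    have "?h P * C = ?h (P * (Pinv * A))"
      unfolding C_def using Pc Pinvc Ac by (intro of_real_hom.mat_hom_mult[symmetric]) auto
    also have "P * (Pinv * A) = A" using Pc Pinvc Ac
      by (simp add: assoc_mult_mat[of _ N N _ N _ N, symmetric] PPinv)
    finally have hPC: "?h P * C = ?h A" .
    have "?h A *\<^sub>v v = (?h P * C) *\<^sub>v v" by (simp add: hPC)
    also have "\<dots> = ?h P *\<^sub>v (C *\<^sub>v v)" using hPc Cc v(1) by (simp add: assoc_mult_mat_vec)
    also have "\<dots> = z \<cdot>\<^sub>v (?h P *\<^sub>v v)" using hPc v by (simp add: mult_mat_vec)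
    finally have eqv: "?h A *\<^sub>v v = z \<cdot>\<^sub>v (?h P *\<^sub>v v)" .
    have hA: "?h A = 1\<^sub>m (m*n) - kron (?h ID) (?h K)" unfolding A_def by (rule map_one_kron[OF IDc K])
    have hP: "?h P = 1\<^sub>m (m*n) - kron (?h SD) (?h K)" unfolding P_def by (rule map_one_kron[OF SDc K])
    have hKV: "?h K = ?h V * ?h \<Lambda> * ?h W" unfolding KV using V L W
      by (simp add: of_real_hom.mat_hom_mult[of _ n n _ n])
    have hWV: "?h W * ?h V = 1\<^sub>m n" using W V
      by (simp add: of_real_hom.mat_hom_mult[of _ n n _ n, symmetric] WV of_real_hom.mat_hom_one)
    have hVW: "?h V * ?h W = 1\<^sub>m n" using W V
      by (simp add: of_real_hom.mat_hom_mult[of _ n n _ n, symmetric] VW of_real_hom.mat_hom_one)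
    have hdg: "diagonal_mat (?h \<Lambda>)" using dg unfolding diagonal_mat_def by auto
    obtain l y where l: "l < n" and ynz: "\<exists>j<m. y j \<noteq> 0"
      and ye: "\<forall>i<m. y i - ?h \<Lambda> $$ (l,l) * (\<Sum>j<m. ?h ID $$ (i,j) * y j)
              = z * (y i - ?h \<Lambda> $$ (l,l) * (\<Sum>j<m. ?h SD $$ (i,j) * y j))"
    proof -
      have c1: "?h ID \<in> carrier_mat m m" "?h SD \<in> carrier_mat m m" using IDc SDc by auto
      have c2: "?h K \<in> carrier_mat n n" "?h \<Lambda> \<in> carrier_mat n n" "?h V \<in> carrier_mat n n"
        "?h W \<in> carrier_mat n n" using K L V W by auto
      have v': "v \<in> carrier_vec (m*n)" "v \<noteq> 0\<^sub>v (m*n)" using v(1,2) unfolding N_def by auto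
      have eqv': "(1\<^sub>m (m*n) - kron (?h ID) (?h K)) *\<^sub>v v = z \<cdot>\<^sub>v ((1\<^sub>m (m*n) - kron (?h SD) (?h K)) *\<^sub>v v)"
        using eqv unfolding hA hP .
      from reduce[OF c1 c2 hKV hWV hVW hdg v' eqv'] that show ?thesis by blast
    qed
    define \<mu> where "\<mu> = - \<Lambda> $$ (l,l)"
    have mu: "\<mu> > 0" using neg l unfolding \<mu>_def by simp
    have Ll: "?h \<Lambda> $$ (l,l) = - complex_of_real \<mu>" using L l unfolding \<mu>_def by simp
    have "\<forall>i<2*M+1. y i + of_real \<mu> * (\<Sum>j<2*M+1. of_real (Iinv M $$ (i,j) * dd M h T j) * y j)
     = z * (y i + of_real \<mu> * (\<Sum>j<2*M+1. of_real (Smat M \<omega> $$ (i,j) * dd M h T j) * y j))"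
    proof (intro allI impI)
      fix i assume i: "i < 2*M+1"
      have s1: "(\<Sum>j<m. ?h ID $$ (i,j) * y j) = (\<Sum>j<2*M+1. of_real (Iinv M $$ (i,j) * dd M h T j) * y j)"
        using i IDc unfolding m_def by (intro sum.cong refl) (simp add: IDe m_def)
      have s2: "(\<Sum>j<m. ?h SD $$ (i,j) * y j) = (\<Sum>j<2*M+1. of_real (Smat M \<omega> $$ (i,j) * dd M h T j) * y j)"
        using i SDc unfolding m_def by (intro sum.cong refl) (simp add: SDe m_def)
      have yi: "y i - ?h \<Lambda> $$ (l,l) * (\<Sum>j<m. ?h ID $$ (i,j) * y j)
              = z * (y i - ?h \<Lambda> $$ (l,l) * (\<Sum>j<m. ?h SD $$ (i,j) * y j))"
        using ye i unfolding m_def by blast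
      show "y i + of_real \<mu> * (\<Sum>j<2*M+1. of_real (Iinv M $$ (i,j) * dd M h T j) * y j)
        = z * (y i + of_real \<mu> * (\<Sum>j<2*M+1. of_real (Smat M \<omega> $$ (i,j) * dd M h T j) * y j))"
        using yi unfolding s1 s2 Ll by (simp only: mult_minus_left diff_conv_add_uminus minus_minus)
    qed
    from col_eig[OF hT mu w _ this] ynz show "z \<in> complex_of_real ` {1..<1/(1-\<omega>)}"
      unfolding m_def by auto
  qed
  show ?thesis
    unfolding Let_def using invP count eig
    unfolding m_def[symmetric] ID_def[symmetric] SD_def[symmetric] A_def[symmetric] P_def[symmetric]
      Pinv_def[symmetric] C_def[symmetric] by simp
qed

end
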